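(* Let $T_r$ be a resistive dyadic tree with resistances $(r_n^k)$ and let $s>0$ be such that $$\sum_{n\geq 1}\frac{\max_{0\le k\le 2^n-1} r_n^k}{2^{n(1-2s)}}<+\infty .$$ Then (this condition implies $\sum_{n\ge1}2^{-n}\max_k r_n^k<\infty$, so that for every $p\in H^1(T_r)$ the sequence $\tilde p_n$ converges in $L^2(\mathbb{Z}_2)$ to a limit $\gamma_0(p)$) the trace operator $\gamma_0$ maps $H^1(T_r)$ continuously into $H^s(\mathbb{Z}_2)$: $\gamma_0(p)\in H^s(\mathbb{Z}_2)$ for all $p\in H^1(T_r)$ and $\|\gamma_0(p)\|_{H^s(\mathbb{Z}_2)}\le C\|p\|_{H^1(T_r)}$ with $C$ independent of $p$.
   Context: The infinite dyadic tree $T$ has vertex set $V$ equal to the disjoint union over $n\ge 0$ of the sets $\mathbb{Z}/2^n\mathbb{Z}$; $x_n^k$ denotes $k\in\mathbb{Z}/2^n\mathbb{Z}$, and $x_0^0$ is the root. For $n<m$, $\varphi_n^m:\mathbb{Z}/2^m\mathbb{Z}\to\mathbb{Z}/2^n\mathbb{Z}$ is the canonical surjection. For $n\ge1$ the edge $e_n^k$ joins $x_n^k$ to $\varphi_{n-1}^n(x_n^k)$. A resistive dyadic tree $T_r$ is $T$ with positive resistances $r_n^k$ on $e_n^k$ ($n\ge1$, $0\le k\le2^n-1$). $|p|_{H^1}^2=\sum_{n\ge1}\sum_k |p(x_n^k)-p(\varphi_{n-1}^n(x_n^k))|^2/r_n^k$, $H^1(T_r)=\{p:V\to\mathbb{R}:|p|_{H^1}<\infty\}$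 with norm $\|p\|_{H^1(T_r)}^2=|p(x_0^0)|^2+|p|_{H^1}^2$. $\mathbb{Z}_2$: 2-adic integers, $|\cdot|_2$ the 2-adic absolute value, $\mu$ the Haar probability measure on $\mathbb{Z}_2$. For $n\ge0$, $\tilde p_n(x)=p(x_n^a)$ where $a\in\{0,\dots,2^n-1\}$, $x\in a+2^n\mathbb{Z}_2$. Sobolev spaces: $\Lambda=\mathbb{Q}_2/\mathbb{Z}_2$ (identified with $\mathbb{Z}[1/2]\cap[0,1)$); for $f\in L^2(\mathbb{Z}_2)$ and $\lambda\in\Lambda$, $\mathcal F(f)(\lambda)=\int_{\mathbb{Z}_2}e^{-2i\pi\lambda x}f(x)\,d\mu(x)$; $H^s(\mathbb{Z}_2)$ is the completion of the space of locally constant functions on $\mathbb{Z}_2$ for the norm $\|f\|_{H^s(\mathbb{Z}_2)}=\big(\sum_{\lambda\in\Lambda}(1+|\lambda|_2)^{2s}|\mathcal F(f)(\lambda)|^2\big)^{1/2}$. *)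

theory Defs
  imports "HOL-Probability.Probability"
begin

text \<open>Dyadic tree: vertex x_n^k is the pair (n,k) with k < 2^n; a function on the
vertices is p :: nat => nat => real (only values with k < 2^n matter).
The parent of x_(n+1)^k is x_n^(k mod 2^n).\<close>

definition max_res :: "(nat \<Rightarrow> nat \<Rightarrow> real) \<Rightarrow> nat \<Rightarrow> real" where
  "max_res r n = Max ((\<lambda>k. r n k) ` {..<2^n})"

definition H1_seminorm_terms :: "(nat \<Rightarrow> nat \<Rightarrow> real) \<Rightarrow> (nat \<Rightarrow> nat \<Rightarrow> real) \<Rightarrow> nat \<Rightarrow> real" where
  "H1_seminorm_terms r p n =
     (\<Sum>k<2^(Suc n). (p (Suc n) k - p n (k mod 2^n))^2 / r (Suc n) k)"

definition in_H1 :: "(nat \<Rightarrow> nat \<Rightarrow> real) \<Rightarrow> (nat \<Rightarrow> nat \<Rightarrow> real) \<Rightarrow> bool" where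
  "in_H1 r p \<longleftrightarrow> summable (H1_seminorm_terms r p)"

definition H1_norm :: "(nat \<Rightarrow> nat \<Rightarrow> real) \<Rightarrow> (nat \<Rightarrow> nat \<Rightarrow> real) \<Rightarrow> real" where
  "H1_norm r p = sqrt ((p 0 0)^2 + suminf (H1_seminorm_terms r p))"

text \<open>2-adic integers as bit sequences (x = sum of x_i 2^i); Haar probability measure
is the product of fair coin measures.\<close>

definition Z2_haar :: "(nat \<Rightarrow> bool) measure" where
  "Z2_haar = PiM UNIV (\<lambda>_. measure_pmf (bernoulli_pmf (1/2)))"

definition z2_trunc :: "nat \<Rightarrow> (nat \<Rightarrow> bool) \<Rightarrow> nat" where
  "z2_trunc n x = (\<Sum>i<n. if x i then 2^i else 0)"   \<comment> \<open>x mod 2^n\<close>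

definition ptilde :: "(nat \<Rightarrow> nat \<Rightarrow> real) \<Rightarrow> nat \<Rightarrow> (nat \<Rightarrow> bool) \<Rightarrow> real" where
  "ptilde p n x = p n (z2_trunc n x)"

definition L2_lim :: "(nat \<Rightarrow> nat \<Rightarrow> real) \<Rightarrow> ((nat \<Rightarrow> bool) \<Rightarrow> real) \<Rightarrow> bool" where
  "L2_lim p g \<longleftrightarrow> g \<in> borel_measurable Z2_haar \<and> integrable Z2_haar (\<lambda>x. (g x)^2) \<and>
     (\<lambda>n. \<integral>x. (ptilde p n x - g x)^2 \<partial>Z2_haar) \<longlonglongrightarrow> 0"

text \<open>Lambda = Q_2/Z_2 identified with Z[1/2] \<inter> [0,1).\<close>

definition Lambda2 :: "real set" where
  "Lambda2 = {real a / 2^m | a m. a < (2::nat)^m}"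

definition ord2 :: "real \<Rightarrow> nat" where
  "ord2 l = (LEAST m. l * 2^m \<in> \<int>)"

definition abs2 :: "real \<Rightarrow> real" where
  "abs2 l = (if l = 0 then 0 else 2 ^ ord2 l)"

text \<open>The character x \<mapsto> exp(-2 i pi l x), computed via x mod 2^(ord2 l).\<close>

definition char2 :: "real \<Rightarrow> (nat \<Rightarrow> bool) \<Rightarrow> complex" where
  "char2 l x = cis (- 2 * pi * l * real (z2_trunc (ord2 l) x))"

definition fourier2 :: "((nat \<Rightarrow> bool) \<Rightarrow> real) \<Rightarrow> real \<Rightarrow> complex" where
  "fourier2 f l = (\<integral>x. char2 l x * complex_of_real (f x) \<partial>Z2_haar)"

definition Hs_terms :: "real \<Rightarrow> ((nat \<Rightarrow> bool) \<Rightarrow> real) \<Rightarrow> real \<Rightarrow> real" where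
  "Hs_terms s f l = (1 + abs2 l) powr (2 * s) * (cmod (fourier2 f l))^2"

definition in_Hs :: "real \<Rightarrow> ((nat \<Rightarrow> bool) \<Rightarrow> real) \<Rightarrow> bool" where
  "in_Hs s f \<longleftrightarrow> Hs_terms s f summable_on Lambda2"

definition Hs_norm :: "real \<Rightarrow> ((nat \<Rightarrow> bool) \<Rightarrow> real) \<Rightarrow> real" where
  "Hs_norm s f = sqrt (infsum (Hs_terms s f) Lambda2)"

end

theory Submission
  imports Defs
begin


lemma trunc_0[simp]: "z2_trunc 0 x = 0" by (simp add: z2_trunc_def)

lemma trunc_Suc: "z2_trunc (Suc m) x = z2_trunc m x + (if x m then 2^m else 0)"
  by (simp add: z2_trunc_def)

lemma trunc_less: "z2_trunc m x < 2^m"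
  by (induction m) (auto simp: trunc_Suc)

lemma trunc_mod: "a \<le> b \<Longrightarrow> z2_trunc b x mod 2^a = z2_trunc a x"
proof (induction b)
  case 0 then show ?case by simp
next
  case (Suc b)
  show ?case
  proof (cases "a = Suc b")
    case True then show ?thesis by (metis mod_less trunc_less)
  next
    case False
    then have "a \<le> b" using Suc by simp
    then have d: "(2::nat)^a dvd 2^b" by (simp add: le_imp_power_dvd)
    have "z2_trunc (Suc b) x mod 2^a = (z2_trunc b x + (if x b then 2^b else 0)) mod 2^a"
      by (simp add: trunc_Suc)
    also have "\<dots> = z2_trunc b x mod 2^a" using d
      by (auto simp: mod_add_right_eq[symmetric])
    finally show ?thesis using Suc \<open>a \<le> b\<close> by simp
  qed
qed

lemma trunc_eq_iff: "k < 2^m \<Longrightarrow> z2_trunc m x = k \<longleftrightarrow> (\<forall>i<m. x i = bit k i)"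
proof (induction m arbitrary: k)
  case 0 then show ?case by simp
next
  case (Suc m)
  have t: "z2_trunc m x < 2^m" by (rule trunc_less)
  have km: "k mod 2^m < 2^m" by simp
  have kd: "k div 2^m < 2" using Suc.prems by (simp add: less_mult_imp_div_less mult.commute)
  have "k div 2^m = 0 \<or> k div 2^m = 1" using kd by linarith
  then have bm: "bit k m \<longleftrightarrow> k div 2^m = 1" by (auto simp: bit_iff_odd)
  have bi: "\<And>i. i < m \<Longrightarrow> bit (k mod 2^m) i = bit k i"
    by (simp add: bit_take_bit_iff take_bit_eq_mod[symmetric])
  have "z2_trunc (Suc m) x = k \<longleftrightarrow> z2_trunc m x = k mod 2^m \<and> (x m \<longleftrightarrow> k div 2^m = 1)"
  proof
    assume h: "z2_trunc (Suc m) x = k"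
    then have "k = z2_trunc m x + (if x m then 2^m else 0)" by (simp add: trunc_Suc)
    then show "z2_trunc m x = k mod 2^m \<and> (x m \<longleftrightarrow> k div 2^m = 1)" using t by auto
  next
    assume h: "z2_trunc m x = k mod 2^m \<and> (x m \<longleftrightarrow> k div 2^m = 1)"
    have e: "k = k mod 2^m + 2^m * (k div 2^m)" by simp
    have "k div 2^m = 0 \<or> k div 2^m = 1" using kd by auto
    then show "z2_trunc (Suc m) x = k"
    proof
      assume "k div 2^m = 0" then show ?thesis using h e by (simp add: trunc_Suc)
    next
      assume a: "k div 2^m = 1" then have "k = k mod 2^m + 2^m" using e by simp
      then show ?thesis using h a by (simp add: trunc_Suc)
    qed
  qed
  also have "\<dots> \<longleftrightarrow> (\<forall>i<Suc m. x i = bit k i)"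
    using Suc.IH[OF km] bi bm by (auto simp: less_Suc_eq)
  finally show ?case .
qed



lemma space_Z2[simp]: "space Z2_haar = UNIV"
  by (simp add: Z2_haar_def space_PiM)

lemma prob_Z2: "prob_space Z2_haar"
  unfolding Z2_haar_def by (rule prob_space_PiM) (simp add: prob_space_measure_pmf)

lemma trunc_set: "k < 2^m \<Longrightarrow> {x. z2_trunc m x = k} =
   prod_emb UNIV (\<lambda>_. measure_pmf (bernoulli_pmf (1/2))) {..<m} (PiE {..<m} (\<lambda>i. {bit k i}))"
  by (rule set_eqI) (simp add: prod_emb_iff trunc_eq_iff restrict_PiE_iff Pi_iff Ball_def)

lemma trunc_emeasure: "k < 2^m \<Longrightarrow> emeasure Z2_haar {x. z2_trunc m x = k} = ennreal (1/2^m)"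
proof -
  assume k: "k < 2^m"
  have "emeasure Z2_haar {x. z2_trunc m x = k} =
        (\<Prod>i\<in>{..<m}. emeasure (measure_pmf (bernoulli_pmf (1/2))) {bit k i})"
    unfolding trunc_set[OF k] Z2_haar_def
    by (rule emeasure_PiM_emb) (auto simp: prob_space_measure_pmf)
  also have "\<dots> = (\<Prod>i\<in>{..<m}. ennreal (1/2))"
    by (intro prod.cong refl) (simp add: emeasure_pmf_single)
  also have "\<dots> = ennreal (1/2) ^ m" by simp
  also have "\<dots> = ennreal ((1/2) ^ m)" by (rule ennreal_power) simp
  also have "\<dots> = ennreal (1/2^m)" by (simp add: power_one_over)
  finally show ?thesis .
qed

lemma trunc_sets: "{x. z2_trunc m x = k} \<in> sets Z2_haar"
proof (cases "k < 2^m")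
  case True
  show ?thesis unfolding trunc_set[OF True] Z2_haar_def
    by (rule sets_PiM_I) auto
next
  case False
  have "z2_trunc m x \<noteq> k" for x using trunc_less[of m x] False by linarith
  then have "{x. z2_trunc m x = k} = {}" by auto
  then show ?thesis by simp
qed

lemma trunc_measurable[measurable]: "z2_trunc m \<in> measurable Z2_haar (count_space UNIV)"
proof -
  have "\<And>k. z2_trunc m -` {k} \<inter> space Z2_haar = {x. z2_trunc m x = k}" by auto
  then show ?thesis by (simp add: measurable_count_space_eq2_countable trunc_sets)
qed

lemma trunc_measure: "k < 2^m \<Longrightarrow> measure Z2_haar {x. z2_trunc m x = k} = 1/2^m"
  using trunc_emeasure by (simp add: measure_def)

lemma trunc_decomp:
  fixes h :: "nat \<Rightarrow> 'b::real_vector"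
  shows "h (z2_trunc m x) = (\<Sum>k<2^m. indicator {x. z2_trunc m x = k} x *\<^sub>R h k)"
proof -
  have "\<And>k. indicator {x. z2_trunc m x = k} x *\<^sub>R h k = (if z2_trunc m x = k then h k else 0)"
    by (simp add: indicator_def)
  then show ?thesis using trunc_less[of m x] by simp
qed

lemma trunc_integrable:
  fixes h :: "nat \<Rightarrow> 'b::{banach,second_countable_topology}"
  shows "integrable Z2_haar (\<lambda>x. h (z2_trunc m x))"
proof -
  interpret prob_space Z2_haar by (rule prob_Z2)
  have i: "integrable Z2_haar (indicator {x. z2_trunc m x = k} :: _ \<Rightarrow> real)" for k
    using trunc_sets emeasure_finite by (intro integrable_real_indicator) (auto simp: less_top[symmetric])
  have "integrable Z2_haar (\<lambda>x. \<Sum>k<2^m. indicator {x. z2_trunc m x = k} x *\<^sub>R h k)"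
    apply (rule Bochner_Integration.integrable_sum)
    apply (rule integrable_scaleR_left)
    apply (rule i)
    done
  then show ?thesis by (subst trunc_decomp) 
qed

lemma trunc_integral:
  fixes h :: "nat \<Rightarrow> 'b::{banach,second_countable_topology}"
  shows "(\<integral>x. h (z2_trunc m x) \<partial>Z2_haar) = (\<Sum>k<2^m. h k) /\<^sub>R 2^m"
proof -
  interpret prob_space Z2_haar by (rule prob_Z2)
  have "(\<integral>x. h (z2_trunc m x) \<partial>Z2_haar) =
     (\<integral>x. (\<Sum>k<2^m. indicator {x. z2_trunc m x = k} x *\<^sub>R h k) \<partial>Z2_haar)"
    by (subst trunc_decomp) rule
  also have "\<dots> = (\<Sum>k<2^m. (1/2^m) *\<^sub>R h k)"
  proof -
    have i: "integrable Z2_haar (indicator {x. z2_trunc m x = k} :: _ \<Rightarrow> real)" for k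
      using trunc_sets emeasure_finite by (intro integrable_real_indicator) (auto simp: less_top[symmetric])
    have "(\<integral>x. (\<Sum>k<2^m. indicator {x. z2_trunc m x = k} x *\<^sub>R h k) \<partial>Z2_haar) =
      (\<Sum>k<2^m. (\<integral>x. indicator {x. z2_trunc m x = k} x *\<^sub>R h k \<partial>Z2_haar))"
      apply (rule Bochner_Integration.integral_sum)
      apply (rule integrable_scaleR_left)
      apply (rule i)
      done
    also have "\<dots> = (\<Sum>k<2^m. (1/2^m) *\<^sub>R h k)"
      apply (rule sum.cong, rule refl)
      apply (subst integral_scaleR_left)
      apply (rule i)
      apply (simp add: trunc_measure)
      done
    finally show ?thesis .
  qed
  also have "\<dots> = (\<Sum>k<2^m. h k) /\<^sub>R 2^m"
    by (simp add: scaleR_sum_right divide_inverse_commute)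
  finally show ?thesis .
qed



lemma lam_ex: "l \<in> Lambda2 \<Longrightarrow> \<exists>a m. l = real a / 2^m \<and> a < (2::nat)^m"
  by (auto simp: Lambda2_def)

lemma lam_range: "l \<in> Lambda2 \<Longrightarrow> 0 \<le> l \<and> l < 1"
proof -
  assume "l \<in> Lambda2"
  then obtain a m where l: "l = real a / 2^m" "a < (2::nat)^m" using lam_ex by blast
  have "real a < real ((2::nat)^m)" using l(2) by (simp only: of_nat_less_iff)
  then have "real a < 2^m" by simp
  then show ?thesis using l(1) by (simp add: divide_less_eq)
qed

lemma lam_int_ex: "l \<in> Lambda2 \<Longrightarrow> \<exists>m. l * 2^m \<in> \<int>"
proof -
  assume "l \<in> Lambda2"
  then obtain a m where l: "l = real a / 2^m" using lam_ex by blast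
  then have e: "l * 2^m = real a" by simp
  show ?thesis
  proof (intro exI)
    show "l * 2^m \<in> \<int>" unfolding e by (rule Ints_of_nat)
  qed
qed

lemma ord_int: "l \<in> Lambda2 \<Longrightarrow> l * 2^(ord2 l) \<in> \<int>"
  unfolding ord2_def by (rule LeastI_ex) (rule lam_int_ex)

lemma ord_le: "l * 2^M \<in> \<int> \<Longrightarrow> ord2 l \<le> M"
  unfolding ord2_def by (rule Least_le)

lemma ord_min: "m < ord2 l \<Longrightarrow> l * 2^m \<notin> \<int>"
  unfolding ord2_def by (rule not_less_Least)

lemma int_mono: "l * 2^m \<in> \<int> \<Longrightarrow> m \<le> M \<Longrightarrow> l * 2^M \<in> (\<int>::real set)"
proof -
  assume a: "l * 2^m \<in> \<int>" "m \<le> M"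
  have "l * 2^M = (l * 2^m) * 2^(M-m)" using a(2) by (simp add: power_add[symmetric])
  moreover have "(2::real)^(M-m) \<in> \<int>"
  proof -
    have "(2::real)^(M-m) = real ((2::nat)^(M-m))" by simp
    then show ?thesis by (metis Ints_of_nat)
  qed
  ultimately show ?thesis using Ints_mult[OF a(1)] by metis
qed

lemma cis_shift: "n \<in> \<int> \<Longrightarrow> cis (a + 2*pi*n) = cis a"
  by (simp add: cis_mult[symmetric])

lemma cis_mod: "l * 2^m \<in> \<int> \<Longrightarrow> cis (-2*pi*l*real (k mod 2^m)) = cis (-2*pi*l*real k)"
proof -
  assume a: "l * 2^m \<in> \<int>"
  have k: "real k = real (k mod 2^m) + 2^m * real (k div 2^m)"
  proof -
    have "real k = real (k mod 2^m) + real (2^m) * real (k div 2^m)"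
      by (subst of_nat_mult[symmetric], subst of_nat_add[symmetric]) simp
    then show ?thesis by simp
  qed
  have "- (l * 2^m) \<in> \<int>" using a by (rule Ints_minus)
  then have n: "- (l * 2^m) * real (k div 2^m) \<in> \<int>" using Ints_mult[OF _ Ints_of_nat[of "k div 2^m"]] by blast
  have "-2*pi*l*real k = -2*pi*l*real (k mod 2^m) + 2*pi*(- (l * 2^m) * real (k div 2^m))"
    by (subst k) (simp add: algebra_simps)
  then show ?thesis using cis_shift[OF n] by simp
qed

lemma fourier_trunc:
  fixes h :: "nat \<Rightarrow> real"
  assumes l: "l \<in> Lambda2" and hML: "M \<le> L" and oL: "ord2 l \<le> L"
  shows "fourier2 (\<lambda>x. h (z2_trunc M x)) l =
    (\<Sum>k<2^L. cis(-2*pi*l*real k) * complex_of_real (h (k mod 2^M))) / 2^L"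
proof -
  define G where "G k = cis(-2*pi*l*real k) * complex_of_real (h (k mod 2^M))" for k
  have pt: "char2 l x * complex_of_real (h (z2_trunc M x)) = G (z2_trunc L x)" for x
  proof -
    have "z2_trunc M x = z2_trunc L x mod 2^M" using trunc_mod[OF hML] by simp
    moreover have "z2_trunc (ord2 l) x = z2_trunc L x mod 2^(ord2 l)" using trunc_mod[OF oL] by simp
    ultimately show ?thesis
      unfolding char2_def G_def using cis_mod[OF ord_int[OF l]] by simp
  qed
  have "fourier2 (\<lambda>x. h (z2_trunc M x)) l = (\<integral>x. G (z2_trunc L x) \<partial>Z2_haar)"
    unfolding fourier2_def pt ..
  also have "\<dots> = (\<Sum>k<2^L. G k) /\<^sub>R 2^L" by (rule trunc_integral)
  also have "\<dots> = (\<Sum>k<2^L. G k) / 2^L" by (simp add: scaleR_conv_of_real divide_inverse_commute)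
  finally show ?thesis unfolding G_def .
qed

lemma pi_cancel: fixes l::real and n::int and M::nat
  assumes n: "-2*pi*l*2^M = real_of_int n * 2 * pi" shows "l*2^M = - real_of_int n"
proof -
  have "pi * (-2*(l*2^M)) = -2*pi*l*2^M" by (simp only: mult.assoc mult.left_commute)
  also have "\<dots> = real_of_int n * 2 * pi" by (rule n)
  also have "\<dots> = pi * (2 * real_of_int n)" by (simp only: mult.assoc mult.commute)
  finally have "-2*(l*2^M) = 2 * real_of_int n" using pi_gt_zero by (subst (asm) mult_left_cancel) auto
  then show ?thesis by simp
qed

lemma sum_vanish:
  fixes h :: "nat \<Rightarrow> real"
  assumes l: "l \<in> Lambda2" and Mo: "M < ord2 l"
  shows "(\<Sum>k<2^(ord2 l). cis(-2*pi*l*real k) * complex_of_real (h (k mod 2^M))) = 0"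
proof -
  define L where "L = ord2 l"
  define N where "N = (2::nat)^(L-M)"
  define f where "f k = cis(-2*pi*l*real k) * complex_of_real (h (k mod 2^M))" for k
  define z where "z = cis(-2*pi*l*2^M)"
  define c where "c i = cis(-2*pi*l*real i) * complex_of_real (h i)" for i
  have LM: "L - M + M = L" using Mo unfolding L_def by simp
  have LN: "(2::nat)^L = N * 2^M" unfolding N_def by (metis LM power_add)
  have fe: "f (i + j*2^M) = c i * z^j" if "i < 2^M" for i j
  proof -
    have m: "(i + j*2^M) mod 2^M = i" using that by simp
    have "cis(-2*pi*l*real (i + j*2^M)) = cis(-2*pi*l*real i + real j * (-2*pi*l*2^M))"
      by (rule arg_cong[where f=cis]) (simp add: algebra_simps)
    also have "\<dots> = cis(-2*pi*l*real i) * cis(real j * (-2*pi*l*2^M))" by (simp add: cis_mult)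
    also have "\<dots> = cis(-2*pi*l*real i) * z^j" by (simp add: z_def Complex.DeMoivre)
    finally have "cis(-2*pi*l*real (i + j*2^M)) = cis(-2*pi*l*real i) * z^j" .
    then show ?thesis unfolding f_def c_def m by simp
  qed
  have "(\<Sum>k<2^L. f k) = (\<Sum>j<N. \<Sum>k\<in>{j*2^M..<j*2^M+2^M}. f k)"
    unfolding LN by (rule sum.nat_group[symmetric])
  also have "\<dots> = (\<Sum>j<N. \<Sum>i<2^M. f (i + j*2^M))"
  proof (rule sum.cong[OF refl])
    fix j
    have "{j*2^M..<j*2^M+2^M} = {0+j*2^M..<2^M+(j*2^M::nat)}" by (simp only: add_0 add.commute[of "j*2^M" "2^M"])
    then show "(\<Sum>k\<in>{j*2^M..<j*2^M+2^M}. f k) = (\<Sum>i<2^M. f (i + j*2^M))"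
      by (simp only: sum.shift_bounds_nat_ivl atLeast0LessThan)
  qed
  also have "\<dots> = (\<Sum>j<N. \<Sum>i<2^M. c i * z^j)"
    by (intro sum.cong refl) (simp add: fe)
  also have "\<dots> = (\<Sum>i<2^M. c i) * (\<Sum>j<N. z^j)"
    unfolding sum_product by (rule sum.swap)
  also have "(\<Sum>j<N. z^j) = 0"
  proof -
    have zN: "z^N = 1"
    proof -
      have NM: "real N * 2^M = 2^L"
      proof -
        have "real (N * 2^M) = real ((2::nat)^L)" using LN by simp
        then show ?thesis by simp
      qed
      have "real N * (-2*pi*l*2^M) = -2*pi*l*(real N * 2^M)" by (simp add: algebra_simps)
      also have "\<dots> = 2*pi*(-(l*2^L))" unfolding NM by simp
      finally have e: "real N * (-2*pi*l*2^M) = 2*pi*(-(l*2^L))" .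
      have "z^N = cis (real N * (-2*pi*l*2^M))" unfolding z_def Complex.DeMoivre ..
      also have "real N * (-2*pi*l*2^M) = 2*pi*(-(l*2^L))" by (rule e)
      also have "cis (2*pi*(-(l*2^L))) = 1"
        using ord_int[OF l] unfolding L_def by (intro cis_multiple_2pi) auto
      finally show ?thesis .
    qed
    have z1: "z \<noteq> 1"
    proof
      assume z: "z = 1"
      have "cos (-2*pi*l*2^M) = Re z" unfolding z_def by simp
      then have "cos (-2*pi*l*2^M) = 1" using z by simp
      from cos_one_2pi_int[THEN iffD1, OF this]
      obtain n :: int where n: "-2*pi*l*2^M = real_of_int n * 2 * pi" by blast
      have "l * 2^M = - of_int n" by (rule pi_cancel[OF n])
      then have "l * 2^M \<in> \<int>" by simp
      then show False using ord_min[OF Mo] by simp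
    qed
    show ?thesis using zN z1 by (simp add: sum_gp_strict)
  qed
  finally show ?thesis unfolding f_def L_def by simp
qed



lemma pi_cancel2: fixes D::real and m::int
  assumes h: "2*pi*D/2^n = real_of_int m * 2 * pi" shows "D = real_of_int m * 2^n"
proof -
  have "pi * (2 * (D/2^n)) = 2*pi*D/2^n" by simp
  also have "\<dots> = real_of_int m * 2 * pi" by (rule h)
  also have "\<dots> = pi * (2 * real_of_int m)" by (simp only: mult.assoc mult.commute)
  finally have "2 * (D/2^n) = 2 * real_of_int m" using pi_gt_zero by (subst (asm) mult_left_cancel) auto
  then have "D/2^n = real_of_int m" by simp
  then show ?thesis by (simp add: divide_eq_eq)
qed

lemma bnd: fixes k k' :: nat assumes "k < 2^n" "k' < 2^n" shows "\<bar>real k' - real k\<bar> < 2^n"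
proof -
  have "real k < real ((2::nat)^n)" "real k' < real ((2::nat)^n)" using assms by (simp_all only: of_nat_less_iff)
  then have "real k < 2^n" "real k' < 2^n" by simp_all
  then show ?thesis using of_nat_0_le_iff[of k] of_nat_0_le_iff[of k'] by (simp only: abs_less_iff) linarith
qed

lemma orth:
  assumes "k < (2::nat)^n" "k' < (2::nat)^n"
  shows "(\<Sum>a<2^n. cis (2*pi*(real a/2^n)*(real k' - real k))) = (if k = k' then 2^n else 0)"
proof (cases "k = k'")
  case True then show ?thesis by simp
next
  case False
  define D where "D = real k' - real k"
  define w where "w = cis (2*pi*D/2^n)"
  have t: "cis (2*pi*(real a/2^n)*(real k' - real k)) = w^a" for a
  proof -
    have eq: "2*pi*(real a/2^n)*(real k' - real k) = real a * (2*pi*D/2^n)" unfolding D_def by simp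
    show ?thesis unfolding w_def Complex.DeMoivre eq by (rule refl)
  qed
  have wN: "w^(2^n) = 1"
  proof -
    have "w^(2^n) = cis (real ((2::nat)^n) * (2*pi*D/2^n))"
      unfolding w_def Complex.DeMoivre ..
    also have "real ((2::nat)^n) * (2*pi*D/2^n) = 2*pi*D" by simp
    also have "cis (2*pi*D) = 1" unfolding D_def by (intro cis_multiple_2pi) auto
    finally show ?thesis .
  qed
  have w1: "w \<noteq> 1"
  proof
    assume w: "w = 1"
    have "cos (2*pi*D/2^n) = Re w" unfolding w_def by simp
    then have "cos (2*pi*D/2^n) = 1" using w by simp
    from cos_one_2pi_int[THEN iffD1, OF this]
    obtain m :: int where m: "2*pi*D/2^n = real_of_int m * 2 * pi" by blast
    have e: "D = real_of_int m * 2^n" by (rule pi_cancel2[OF m])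
    have b: "\<bar>D\<bar> < 2^n" unfolding D_def using bnd[OF assms(1,2)] .
    have "m \<noteq> 0"
    proof
      assume "m = 0"
      then have "D = 0" using e by simp
      then have "real k' = real k" unfolding D_def by simp
      then show False using False by simp
    qed
    then have m1: "\<bar>real_of_int m\<bar> \<ge> 1" by linarith
    have "\<bar>real_of_int m * 2^n\<bar> < 2^n" using b unfolding e .
    then have "\<bar>real_of_int m\<bar> * 2^n < 1 * 2^n" by (simp add: abs_mult)
    then have "\<bar>real_of_int m\<bar> < 1" by (rule mult_right_less_imp_less) simp
    then show False using m1 by simp
  qed
  have "(\<Sum>a<2^n. cis (2*pi*(real a/2^n)*(real k' - real k))) = (\<Sum>a<2^n. w^a)"
    by (simp only: t)
  also have "\<dots> = 0" using wN w1 by (simp add: sum_gp_strict)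
  finally show ?thesis using False by simp
qed

lemma term_eq:
  fixes t x y :: real
  shows   "cis(-2*pi*t*real k) * complex_of_real x * (cis(2*pi*t*real k') * complex_of_real y)
   = complex_of_real (x*y) * cis(2*pi*t*(real k' - real k))"
proof -
  have "cis(-2*pi*t*real k) * cis(2*pi*t*real k') = cis(-2*pi*t*real k + 2*pi*t*real k')"
    by (rule cis_mult)
  also have "-2*pi*t*real k + 2*pi*t*real k' = 2*pi*t*(real k' - real k)"
    by (simp add: right_diff_distrib)
  finally have c: "cis(-2*pi*t*real k) * cis(2*pi*t*real k') = cis(2*pi*t*(real k' - real k))" .
  have "cis(-2*pi*t*real k) * complex_of_real x * (cis(2*pi*t*real k') * complex_of_real y)
     = (cis(-2*pi*t*real k) * cis(2*pi*t*real k')) * (complex_of_real x * complex_of_real y)"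
    by (simp only: mult_ac)
  also have "\<dots> = complex_of_real (x*y) * cis(2*pi*t*(real k' - real k))"
    unfolding c by (simp add: mult.commute)
  finally show ?thesis .
qed

lemma parseval:
  fixes h :: "nat \<Rightarrow> real"
  shows "(\<Sum>a<2^n. (cmod (\<Sum>k<2^n. cis(-2*pi*(real a/2^n)*real k) * complex_of_real (h k)))^2)
       = 2^n * (\<Sum>k<2^n. (h k)^2)"
proof -
  define N :: nat where "N = 2^n"
  define S where "S a = (\<Sum>k<N. cis(-2*pi*(real a/2^n)*real k) * complex_of_real (h k))" for a
  define E where "E a k k' = cis (2*pi*(real a/2^n)*(real k' - real k))" for a k k'
  have cS: "cnj (S a) = (\<Sum>k<N. cis(2*pi*(real a/2^n)*real k) * complex_of_real (h k))" for a
    unfolding S_def by (simp add: cis_cnj)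
  have pr: "S a * cnj (S a) = (\<Sum>k<N. \<Sum>k'<N. complex_of_real (h k * h k') * E a k k')" for a
  proof -
    have "S a * cnj (S a) = S a * (\<Sum>k<N. cis(2*pi*(real a/2^n)*real k) * complex_of_real (h k))"
      by (simp only: cS)
    also have "\<dots> = (\<Sum>k<N. \<Sum>k'<N.
      (cis(-2*pi*(real a/2^n)*real k) * complex_of_real (h k)) * (cis(2*pi*(real a/2^n)*real k') * complex_of_real (h k')))"
      unfolding S_def by (rule sum_product)
    also have "\<dots> = (\<Sum>k<N. \<Sum>k'<N. complex_of_real (h k * h k') * E a k k')"
      unfolding E_def by (simp only: term_eq)
    finally show ?thesis .
  qed
  have "complex_of_real (\<Sum>a<N. (cmod (S a))^2) = (\<Sum>a<N. S a * cnj (S a))"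
    by (simp only: of_real_sum complex_norm_square)
  also have "\<dots> = (\<Sum>a<N. \<Sum>k<N. \<Sum>k'<N. complex_of_real (h k * h k') * E a k k')"
    by (simp only: pr)
  also have "\<dots> = (\<Sum>k<N. \<Sum>a<N. \<Sum>k'<N. complex_of_real (h k * h k') * E a k k')"
    by (rule sum.swap)
  also have "\<dots> = (\<Sum>k<N. \<Sum>k'<N. \<Sum>a<N. complex_of_real (h k * h k') * E a k k')"
    by (rule sum.cong[OF refl]) (rule sum.swap)
  also have "\<dots> = (\<Sum>k<N. \<Sum>k'<N. complex_of_real (h k * h k') * (\<Sum>a<N. E a k k'))"
    by (simp only: sum_distrib_left)
  also have "\<dots> = (\<Sum>k<N. \<Sum>k'<N. complex_of_real (h k * h k') * (if k = k' then 2^n else 0))"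
  proof (rule sum.cong[OF refl], rule sum.cong[OF refl])
    fix k k' assume "k \<in> {..<N}" "k' \<in> {..<N}"
    then have o: "(\<Sum>a<N. E a k k') = (if k = k' then 2^n else 0)"
      unfolding E_def N_def by (intro orth) auto
    show "complex_of_real (h k * h k') * (\<Sum>a<N. E a k k') = complex_of_real (h k * h k') * (if k = k' then 2^n else 0)"
      by (simp only: o)
  qed
  also have "\<dots> = (\<Sum>k<N. complex_of_real (h k * h k) * 2^n)"
    by (simp add: if_distrib cong: if_cong)
  also have "\<dots> = complex_of_real (2^n * (\<Sum>k<N. (h k)^2))"
    by (simp add: sum_distrib_left power2_eq_square mult.commute N_def)
  finally have "(\<Sum>a<N. (cmod (S a))^2) = 2^n * (\<Sum>k<N. (h k)^2)" by (simp only: of_real_eq_iff)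
  then show ?thesis unfolding S_def N_def .
qed



lemma abs2_le: "l \<in> Lambda2 \<Longrightarrow> ord2 l \<le> n \<Longrightarrow> abs2 l \<le> 2^n"
  by (auto simp: abs2_def)

lemma F1_sub: assumes "l \<in> Lambda2" "ord2 l \<le> n"
  shows "l \<in> (\<lambda>a. real a / 2^n) ` {..<2^n}"
proof -
  have i: "l * 2^n \<in> \<int>" using int_mono[OF ord_int[OF assms(1)] assms(2)] .
  then obtain z where z: "l * 2^n = of_int z" by (auto elim: Ints_cases)
  have r: "0 \<le> l" "l < 1" using lam_range[OF assms(1)] by auto
  have "0 \<le> l * 2^n" using r(1) by simp
  then have "0 \<le> real_of_int z" using z by simp
  then have z0: "0 \<le> z" by simp
  have "l * 2^n < 1 * 2^n" using r by (intro mult_strict_right_mono) auto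
  then have "real_of_int z < 2^n" using z by simp
  then have zl: "z < 2^n" by (metis of_int_less_iff of_int_numeral of_int_power)
  define a where "a = nat z"
  have "a < 2^n" using zl z0 unfolding a_def by (metis nat_less_iff of_nat_numeral of_nat_power)
  moreover have "l = real a / 2^n" using z z0 unfolding a_def by (simp add: field_simps)
  ultimately show ?thesis by blast
qed

lemma bessel:
  fixes h :: "nat \<Rightarrow> real"
  assumes s: "0 \<le> s" and F: "finite F" "F \<subseteq> Lambda2"
  shows "(\<Sum>l\<in>F. (1 + abs2 l) powr (2 * s) * (cmod (fourier2 (\<lambda>x. h (z2_trunc n x)) l))^2)
     \<le> (1 + 2^n) powr (2 * s) * ((\<Sum>k<2^n. (h k)^2) / 2^n)"
proof -
  define W :: real where "W = (1 + 2^n) powr (2 * s)"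
  define T where "T l = (\<Sum>k<(2::nat)^n. cis(-2*pi*l*real k) * complex_of_real (h k))" for l
  define F1 where "F1 = {l\<in>F. ord2 l \<le> n}"
  have fz: "fourier2 (\<lambda>x. h (z2_trunc n x)) l = 0" if "l \<in> F" "l \<notin> F1" for l
  proof -
    have l: "l \<in> Lambda2" "n < ord2 l" using that F unfolding F1_def by auto
    show ?thesis using fourier_trunc[OF l(1), of n "ord2 l" h] sum_vanish[OF l, of h] l(2) by simp
  qed
  have fv: "fourier2 (\<lambda>x. h (z2_trunc n x)) l = T l / 2^n" if "l \<in> F1" for l
  proof -
    have l: "l \<in> Lambda2" "ord2 l \<le> n" using that F unfolding F1_def by auto
    have "(\<Sum>k<2^n. cis(-2*pi*l*real k) * complex_of_real (h (k mod 2^n))) = T l"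
      unfolding T_def by (intro sum.cong refl) simp
    then show ?thesis using fourier_trunc[OF l(1) order_refl l(2), of h] by simp
  qed
  have "(\<Sum>l\<in>F. (1 + abs2 l) powr (2 * s) * (cmod (fourier2 (\<lambda>x. h (z2_trunc n x)) l))^2)
     = (\<Sum>l\<in>F1. (1 + abs2 l) powr (2 * s) * (cmod (fourier2 (\<lambda>x. h (z2_trunc n x)) l))^2)"
    using F(1) fz by (intro sum.mono_neutral_right) (auto simp: F1_def)
  also have "\<dots> \<le> (\<Sum>l\<in>F1. W * ((cmod (T l))^2 / 4^n))"
  proof (rule sum_mono)
    fix l assume l: "l \<in> F1"
    then have l': "l \<in> Lambda2" "ord2 l \<le> n" using F unfolding F1_def by auto
    have a0: "0 \<le> abs2 l" by (simp add: abs2_def)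
    have w: "(1 + abs2 l) powr (2 * s) \<le> W" unfolding W_def
      using abs2_le[OF l'] a0 s by (intro powr_mono2) auto
    have e: "(cmod (fourier2 (\<lambda>x. h (z2_trunc n x)) l))^2 = (cmod (T l))^2 / 4^n"
    proof -
      have a: "cmod ((2::complex)^n) = 2^n" by (simp add: norm_power)
      have b: "((2::real)^n)^2 = 4^n" by (simp add: power2_eq_square power_mult_distrib[symmetric])
      show ?thesis unfolding fv[OF l] norm_divide power_divide a b ..
    qed
    show "(1 + abs2 l) powr (2 * s) * (cmod (fourier2 (\<lambda>x. h (z2_trunc n x)) l))^2 \<le> W * ((cmod (T l))^2 / 4^n)"
    proof -
      have "0 \<le> (cmod (T l))^2 / 4^n" by simp
      then show ?thesis unfolding e using w by (rule mult_right_mono[rotated])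
    qed
  qed
  also have "\<dots> \<le> (\<Sum>l\<in>(\<lambda>a. real a / 2^n) ` {..<2^n}. W * ((cmod (T l))^2 / 4^n))"
    using F1_sub F unfolding F1_def W_def by (intro sum_mono2) auto
  also have "\<dots> = (\<Sum>a<2^n. W * ((cmod (T (real a / 2^n)))^2 / 4^n))"
    by (subst sum.reindex) (auto simp: inj_on_def)
  also have "\<dots> = W / 4^n * (\<Sum>a<2^n. (cmod (T (real a / 2^n)))^2)"
    by (simp add: sum_distrib_left)
  also have "(\<Sum>a<2^n. (cmod (T (real a / 2^n)))^2) = 2^n * (\<Sum>k<2^n. (h k)^2)"
    unfolding T_def by (rule parseval)
  also have "W / 4^n * (2^n * (\<Sum>k<2^n. (h k)^2)) = W * ((\<Sum>k<2^n. (h k)^2) / 2^n)"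
  proof -
    have "(4::real)^n = 2^n * 2^n" by (simp add: power_mult_distrib[symmetric])
    then show ?thesis by (simp add: field_simps)
  qed
  finally show ?thesis unfolding W_def .
qed



definition hh :: "(nat \<Rightarrow> nat \<Rightarrow> real) \<Rightarrow> nat \<Rightarrow> nat \<Rightarrow> real" where
  "hh p n k = p n k - (if n = 0 then 0 else p (n - 1) (k mod 2^(n - 1)))"

definition ee :: "(nat \<Rightarrow> nat \<Rightarrow> real) \<Rightarrow> nat \<Rightarrow> (nat \<Rightarrow> bool) \<Rightarrow> real" where
  "ee p n x = hh p n (z2_trunc n x)"

lemma tele: "ptilde p N x = (\<Sum>n<Suc N. ee p n x)"
proof (induction N)
  case 0 then show ?case by (simp add: ptilde_def ee_def hh_def)
next
  case (Suc N)
  have m: "z2_trunc (Suc N) x mod 2^N = z2_trunc N x" by (rule trunc_mod) simp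
  have "ee p (Suc N) x = ptilde p (Suc N) x - ptilde p N x"
    by (simp add: ee_def hh_def ptilde_def m)
  then show ?case using Suc.IH by simp
qed

lemma ee_int2: "(\<integral>x. (ee p n x)^2 \<partial>Z2_haar) = (\<Sum>k<2^n. (hh p n k)^2) / 2^n"
  unfolding ee_def using trunc_integral[of "\<lambda>k. (hh p n k)^2" n] by (simp add: divide_inverse_commute)

lemma meas_trunc_fun[measurable]: "(\<lambda>x. f (z2_trunc n x)) \<in> borel_measurable Z2_haar"
  by (rule measurable_compose[OF trunc_measurable]) simp

lemma ptilde_meas[measurable]: "ptilde p n \<in> borel_measurable Z2_haar"
  unfolding ptilde_def by (rule meas_trunc_fun)

lemma ee_meas[measurable]: "ee p n \<in> borel_measurable Z2_haar"
  unfolding ee_def by (rule meas_trunc_fun)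

lemma max_res_ge: "k < 2^n \<Longrightarrow> r n k \<le> max_res r n"
  unfolding max_res_def by (rule Max_ge) auto

lemma energy:
  assumes r: "\<forall>n k. 1 \<le> n \<and> k < 2^n \<longrightarrow> 0 < r n k"
  shows "(\<Sum>k<2^(Suc m). (hh p (Suc m) k)^2) \<le> max_res r (Suc m) * H1_seminorm_terms r p m"
  unfolding H1_seminorm_terms_def sum_distrib_left
proof (rule sum_mono)
  fix k :: nat assume k: "k \<in> {..<2^(Suc m)}"
  define d where "d = p (Suc m) k - p m (k mod 2^m)"
  have rp: "0 < r (Suc m) k" using r[rule_format, of "Suc m" k] k by simp
  have rM: "r (Suc m) k \<le> max_res r (Suc m)" using k by (intro max_res_ge) auto
  have "d^2 = r (Suc m) k * (d^2 / r (Suc m) k)" using rp by simp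
  also have "\<dots> \<le> max_res r (Suc m) * (d^2 / r (Suc m) k)"
    using rp rM by (intro mult_right_mono) auto
  finally show "(hh p (Suc m) k)^2 \<le> max_res r (Suc m) * ((p (Suc m) k - p m (k mod 2^m))^2 / r (Suc m) k)"
    unfolding d_def hh_def by simp
qed

lemma H1_nonneg:
  assumes r: "\<forall>n k. 1 \<le> n \<and> k < 2^n \<longrightarrow> 0 < r n k"
  shows "0 \<le> H1_seminorm_terms r p m"
  unfolding H1_seminorm_terms_def
proof (intro sum_nonneg divide_nonneg_nonneg)
  fix k :: nat assume "k \<in> {..<2^(Suc m)}"
  then show "0 \<le> r (Suc m) k" using r[rule_format, of "Suc m" k] by simp
qed simp

lemma max_res_pos:
  assumes r: "\<forall>n k. 1 \<le> n \<and> k < 2^n \<longrightarrow> 0 < r n k" and n: "1 \<le> n"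
  shows "0 < max_res r n"
proof -
  have "0 < r n 0" using r n by auto
  also have "\<dots> \<le> max_res r n" by (rule max_res_ge) simp
  finally show ?thesis .
qed

definition cw :: "(nat \<Rightarrow> nat \<Rightarrow> real) \<Rightarrow> real \<Rightarrow> nat \<Rightarrow> real" where
  "cw r s n = (1 + 2^n) powr (2 * s) * (if n = 0 then 1 else max_res r n / 2^n)"

lemma cw_pos:
  assumes r: "\<forall>n k. 1 \<le> n \<and> k < 2^n \<longrightarrow> 0 < r n k"
  shows "0 < cw r s n"
proof -
  have "(0::real) < 2^n" by simp
  then have "(0::real) < 1 + 2^n" by linarith
  then have "0 < (1 + (2::real)^n) powr (2 * s)" by simp
  then show ?thesis unfolding cw_def using max_res_pos[OF r, of n] by (auto intro!: mult_pos_pos divide_pos_pos)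
qed

lemma w_ge1: "0 \<le> s \<Longrightarrow> 1 \<le> (1 + 2^n) powr (2 * (s::real))"
  by (rule ge_one_powr_ge_zero) auto

lemma cw_summable:
  assumes s: "s > 0"
    and r: "\<forall>n k. 1 \<le> n \<and> k < 2^n \<longrightarrow> 0 < r n k"
    and hs: "summable (\<lambda>n. max_res r (Suc n) / 2 powr (real (Suc n) * (1 - 2 * s)))"
  shows "summable (cw r s)"
proof -
  have b: "norm (cw r s (Suc m)) \<le> 2 powr (2 * s) * (max_res r (Suc m) / 2 powr (real (Suc m) * (1 - 2 * s)))" for m
  proof -
    define x where "x = real (Suc m)"
    define M where "M = max_res r (Suc m)"
    have M0: "0 < M" unfolding M_def by (rule max_res_pos[OF r]) simp
    have p2: "(2::real)^(Suc m) = 2 powr x" unfolding x_def by (rule powr_realpow[symmetric]) simp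
    have w: "(1 + 2^(Suc m)) powr (2 * s) \<le> (2 * 2 powr x) powr (2 * s)"
      using s one_le_power[of "2::real" "Suc m"] unfolding p2[symmetric] by (intro powr_mono2) auto
    also have "\<dots> = 2 powr (2 * s) * 2 powr (x * (2 * s))"
      by (simp add: powr_mult powr_powr)
    finally have w: "(1 + 2^(Suc m)) powr (2 * s) \<le> 2 powr (2 * s) * 2 powr (x * (2 * s))" .
    have sp: "2 powr (x * (1 - 2 * s)) * 2 powr (x * (2 * s)) = 2 powr x"
      by (simp add: powr_add[symmetric] algebra_simps)
    have "cw r s (Suc m) = (1 + 2^(Suc m)) powr (2 * s) * (M / 2 powr x)"
      unfolding cw_def M_def p2 by simp
    also have "\<dots> \<le> 2 powr (2 * s) * 2 powr (x * (2 * s)) * (M / 2 powr x)"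
      using w M0 by (intro mult_right_mono) auto
    also have "\<dots> = 2 powr (2 * s) * (M / 2 powr (x * (1 - 2 * s)))"
      unfolding sp[symmetric] by (simp add: field_simps)
    finally show ?thesis using cw_pos[OF r, of s "Suc m"] unfolding M_def x_def by simp
  qed
  have "summable (\<lambda>m. cw r s (Suc m))"
    by (rule summable_comparison_test'[OF summable_mult[OF hs] b])
  then show ?thesis by (simp only: summable_Suc_iff)
qed

definition beta :: "(nat \<Rightarrow> nat \<Rightarrow> real) \<Rightarrow> (nat \<Rightarrow> nat \<Rightarrow> real) \<Rightarrow> nat \<Rightarrow> real" where
  "beta r p n = (if n = 0 then (p 0 0)^2 else H1_seminorm_terms r p (n - 1))"

definition Ivar :: "(nat \<Rightarrow> nat \<Rightarrow> real) \<Rightarrow> nat \<Rightarrow> real" where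
  "Ivar p n = (\<Sum>k<2^n. (hh p n k)^2) / 2^n"

lemma key_bound:
  assumes s: "s \<ge> 0" and r: "\<forall>n k. 1 \<le> n \<and> k < 2^n \<longrightarrow> 0 < r n k"
  shows "(1 + 2^n) powr (2 * s) * Ivar p n \<le> cw r s n * beta r p n"
proof (cases n)
  case 0 then show ?thesis by (simp add: Ivar_def cw_def beta_def hh_def)
next
  case (Suc m)
  have W: "0 \<le> (1 + 2^n) powr (2 * s)" by simp
  have "Ivar p n \<le> max_res r (Suc m) * H1_seminorm_terms r p m / 2^n"
    unfolding Ivar_def Suc using energy[OF r, of p m] by (simp add: divide_right_mono)
  then have "(1 + 2^n) powr (2 * s) * Ivar p n \<le> (1 + 2^n) powr (2 * s) * (max_res r (Suc m) * H1_seminorm_terms r p m / 2^n)"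
    using W by (rule mult_left_mono)
  also have "\<dots> = cw r s n * beta r p n" unfolding cw_def beta_def Suc by simp
  finally show ?thesis .
qed

lemma Ivar_nonneg: "0 \<le> Ivar p n"
  unfolding Ivar_def by (intro divide_nonneg_nonneg sum_nonneg) auto

lemma ee_int2': "(\<integral>x. (ee p n x)^2 \<partial>Z2_haar) = Ivar p n"
  unfolding ee_int2 Ivar_def ..

lemma cs_weighted:
  fixes a c :: "nat \<Rightarrow> real"
  assumes "\<And>n. n \<in> A \<Longrightarrow> 0 < c n"
  shows "(\<Sum>n\<in>A. a n)^2 \<le> (\<Sum>n\<in>A. c n) * (\<Sum>n\<in>A. (a n)^2 / c n)"
proof -
  have "(\<Sum>n\<in>A. a n) = (\<Sum>n\<in>A. sqrt (c n) * (a n / sqrt (c n)))"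
  proof (rule sum.cong[OF refl])
    fix n assume "n \<in> A" then have "0 < c n" by (rule assms)
    then show "a n = sqrt (c n) * (a n / sqrt (c n))" by simp
  qed
  then have "(\<Sum>n\<in>A. a n)^2 \<le> (\<Sum>n\<in>A. (sqrt (c n))^2) * (\<Sum>n\<in>A. (a n / sqrt (c n))^2)"
    using Cauchy_Schwarz_ineq_sum by metis
  also have "\<dots> = (\<Sum>n\<in>A. c n) * (\<Sum>n\<in>A. (a n)^2 / c n)"
  proof -
    have 1: "(\<Sum>n\<in>A. (sqrt (c n))^2) = (\<Sum>n\<in>A. c n)"
    proof (rule sum.cong[OF refl])
      fix n assume "n \<in> A" then have "0 < c n" by (rule assms)
      then show "(sqrt (c n))^2 = c n" by simp
    qed
    have 2: "(\<Sum>n\<in>A. (a n / sqrt (c n))^2) = (\<Sum>n\<in>A. (a n)^2 / c n)"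
    proof (rule sum.cong[OF refl])
      fix n assume "n \<in> A" then have "0 < c n" by (rule assms)
      then show "(a n / sqrt (c n))^2 = (a n)^2 / c n" by (simp add: power_divide)
    qed
    show ?thesis unfolding 1 2 ..
  qed
  finally show ?thesis .
qed



lemma tail_tendsto: fixes f :: "nat \<Rightarrow> real" assumes f: "summable f"
  shows "(\<lambda>N. \<Sum>i. f (i + N)) \<longlonglongrightarrow> 0"
proof -
  have e: "(\<lambda>N. \<Sum>i. f (i + N)) = (\<lambda>N. suminf f - (\<Sum>i<N. f i))"
  proof
    fix N show "(\<Sum>i. f (i + N)) = suminf f - (\<Sum>i<N. f i)"
      using suminf_split_initial_segment[OF f, of N] by simp
  qed
  have "(\<lambda>N. suminf f - (\<Sum>i<N. f i)) \<longlonglongrightarrow> suminf f - suminf f"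
    by (intro tendsto_diff tendsto_const summable_LIMSEQ f)
  then show ?thesis unfolding e by simp
qed

lemma ptilde_diff: "N \<le> M \<Longrightarrow> ptilde p M x - ptilde p N x = (\<Sum>n\<in>{Suc N..<Suc M}. ee p n x)"
proof -
  assume NM: "N \<le> M"
  have "(\<Sum>n<Suc M. ee p n x) = (\<Sum>n<Suc N. ee p n x) + (\<Sum>n\<in>{Suc N..<Suc M}. ee p n x)"
    unfolding lessThan_atLeast0 using NM by (intro sum.atLeastLessThan_concat[symmetric]) auto
  then show ?thesis unfolding tele[of p M x] tele[of p N x] by simp
qed

lemma csum_tail:
  fixes c :: "nat \<Rightarrow> real"
  assumes NM: "N \<le> M" and cs: "summable c" and cn: "\<And>n. 0 \<le> c n"
  shows "(\<Sum>n\<in>{Suc N..<Suc M}. c n) \<le> (\<Sum>i. c (i + Suc N))"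
proof -
  have "{Suc N..<Suc M} = {0 + Suc N..<(M - N) + Suc N}" using NM by auto
  then have "(\<Sum>n\<in>{Suc N..<Suc M}. c n) = (\<Sum>i\<in>{0..<M - N}. c (i + Suc N))"
    by (simp only: sum.shift_bounds_nat_ivl)
  also have "\<dots> \<le> (\<Sum>i. c (i + Suc N))"
  proof -
    have "summable (\<lambda>i. c (i + Suc N))" by (rule summable_ignore_initial_segment[OF cs])
    then show ?thesis by (rule sum_le_suminf) (auto simp: cn)
  qed
  finally show ?thesis .
qed

lemma sq_bound: "(a::real)^2 \<le> 2 * (b - a)^2 + 2 * b^2"
proof -
  have "0 \<le> (2 * b - a)^2" by simp
  then show ?thesis by (simp add: power2_eq_square algebra_simps)
qed

lemma exists_lim:
  assumes s: "s > 0" and r: "\<forall>n k. 1 \<le> n \<and> k < 2^n \<longrightarrow> 0 < r n k"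
    and cs: "summable (cw r s)" and hp: "in_H1 r p"
  shows "\<exists>g. L2_lim p g"
proof -
  interpret P: prob_space Z2_haar by (rule prob_Z2)
  define c where "c = cw r s"
  have cpos: "\<And>n. 0 < c n" unfolding c_def by (rule cw_pos[OF r])
  have cnn: "\<And>n. 0 \<le> c n" using cpos less_imp_le by blast
  have csum: "summable c" using cs unfolding c_def .
  have hs: "summable (H1_seminorm_terms r p)" using hp unfolding in_H1_def .
  have bsum: "summable (beta r p)"
  proof -
    have "summable (\<lambda>n. beta r p (Suc n))" using hs by (simp add: beta_def)
    then show ?thesis by (simp only: summable_Suc_iff)
  qed
  have bnn: "\<And>n. 0 \<le> beta r p n" using H1_nonneg[OF r] by (simp add: beta_def)
  define B where "B = suminf (beta r p)"
  have B0: "0 \<le> B" unfolding B_def by (rule suminf_nonneg[OF bsum bnn])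
  have ratio: "Ivar p n / c n \<le> beta r p n" for n
  proof -
    have "Ivar p n = 1 * Ivar p n" by simp
    also have "\<dots> \<le> (1 + 2^n) powr (2 * s) * Ivar p n"
      using w_ge1[of s n] s Ivar_nonneg[of p n] by (intro mult_right_mono) auto
    also have "\<dots> \<le> c n * beta r p n" unfolding c_def using s by (intro key_bound[OF _ r]) auto
    finally show ?thesis using cpos[of n] by (simp add: pos_divide_le_eq mult.commute)
  qed
  define Q where "Q x = (\<Sum>n. ennreal ((ee p n x)^2 / c n))" for x
  have Qmeas: "Q \<in> borel_measurable Z2_haar" unfolding Q_def by measurable
  have ee2_int: "integrable Z2_haar (\<lambda>x. (ee p n x)^2 / c n)" for n
    unfolding ee_def using trunc_integrable[of "\<lambda>k. (hh p n k)^2 / c n" n] by simp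
  have each: "(\<integral>\<^sup>+x. ennreal ((ee p n x)^2 / c n) \<partial>Z2_haar) = ennreal (Ivar p n / c n)" for n
    using cnn[of n] by (subst nn_integral_eq_integral[OF ee2_int]) (auto simp: ee_int2')
  have QI: "(\<integral>\<^sup>+x. Q x \<partial>Z2_haar) \<le> ennreal B"
  proof -
    have "(\<integral>\<^sup>+x. Q x \<partial>Z2_haar) = (\<Sum>n. \<integral>\<^sup>+x. ennreal ((ee p n x)^2 / c n) \<partial>Z2_haar)"
      unfolding Q_def by (rule nn_integral_suminf) measurable
    also have "\<dots> = (\<Sum>n. ennreal (Ivar p n / c n))" by (simp only: each)
    also have "\<dots> \<le> (\<Sum>n. ennreal (beta r p n))"
      by (intro suminf_le summableI ennreal_leI ratio)
    also have "\<dots> = ennreal B" unfolding B_def by (rule suminf_ennreal2[OF bnn bsum])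
    finally show ?thesis .
  qed
  define T where "T N = (\<Sum>i. c (i + Suc N))" for N
  have Tpos: "0 < T N" for N
    unfolding T_def by (intro suminf_pos summable_ignore_initial_segment csum cpos)
  have Tlim: "T \<longlonglongrightarrow> 0"
  proof -
    have "(\<lambda>N. \<Sum>i. c (i + Suc N)) \<longlonglongrightarrow> 0"
      using LIMSEQ_Suc[OF tail_tendsto[OF csum]] by simp
    then show ?thesis unfolding T_def by simp
  qed
  have PB: "ennreal ((ptilde p M x - ptilde p N x)^2) \<le> ennreal (T N) * Q x" if NM: "N \<le> M" for M N x
  proof -
    define A where "A = {Suc N..<Suc M}"
    define SA where "SA = (\<Sum>n\<in>A. (ee p n x)^2 / c n)"
    have SA0: "0 \<le> SA" unfolding SA_def using cnn by (intro sum_nonneg divide_nonneg_nonneg) auto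
    have "(ptilde p M x - ptilde p N x)^2 = (\<Sum>n\<in>A. ee p n x)^2"
      unfolding A_def ptilde_diff[OF NM] ..
    also have "\<dots> \<le> (\<Sum>n\<in>A. c n) * SA" unfolding SA_def by (rule cs_weighted) (rule cpos)
    also have "\<dots> \<le> T N * SA"
      unfolding A_def T_def using csum_tail[OF NM csum cnn] SA0 by (rule mult_right_mono)
    finally have rb: "(ptilde p M x - ptilde p N x)^2 \<le> T N * SA" .
    have "ennreal SA = (\<Sum>n\<in>A. ennreal ((ee p n x)^2 / c n))"
      unfolding SA_def using cnn by (subst sum_ennreal) auto
    also have "\<dots> \<le> Q x" unfolding Q_def A_def by (intro sum_le_suminf summableI) auto
    finally have sq: "ennreal SA \<le> Q x" .
    have "ennreal ((ptilde p M x - ptilde p N x)^2) \<le> ennreal (T N * SA)"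
      using rb by (rule ennreal_leI)
    also have "\<dots> = ennreal (T N) * ennreal SA" using Tpos[of N] SA0 by (simp add: ennreal_mult)
    also have "\<dots> \<le> ennreal (T N) * Q x" using sq by (rule mult_left_mono) simp
    finally show ?thesis .
  qed
  define g where "g x = lim (\<lambda>N. ptilde p N x)" for x
  have gmeas: "g \<in> borel_measurable Z2_haar" unfolding g_def by measurable
  have key: "ennreal ((ptilde p N x - g x)^2) \<le> ennreal (T N) * Q x" for N x
  proof (cases "Q x = \<top>")
    case True
    have "ennreal (T N) \<noteq> 0" using Tpos[of N] by simp
    then have "ennreal (T N) * Q x = \<top>" using True by (simp add: ennreal_mult_top)
    then show ?thesis by simp
  next
    case False
    define q where "q = enn2real (Q x)"
    have Qq: "Q x = ennreal q" unfolding q_def using False by (simp add: less_top)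
    have q0: "0 \<le> q" unfolding q_def by simp
    have rpb: "(ptilde p M x - ptilde p N x)^2 \<le> T N * q" if "N \<le> M" for M N
    proof -
      have "ennreal ((ptilde p M x - ptilde p N x)^2) \<le> ennreal (T N * q)"
        using PB[OF that, of x] Tpos[of N] q0 unfolding Qq by (simp add: ennreal_mult)
      then show ?thesis using Tpos[of N] q0 by (subst (asm) ennreal_le_iff) auto
    qed
    have Tq: "(\<lambda>N. T N * q) \<longlonglongrightarrow> 0" using tendsto_mult_left_zero[OF Tlim, of q] by simp
    have cau: "Cauchy (\<lambda>N. ptilde p N x)"
    proof (rule metric_CauchyI)
      fix e :: real assume e: "0 < e"
      have "eventually (\<lambda>N. T N * q < (e/2)^2) sequentially"
        using order_tendstoD(2)[OF Tq, of "(e/2)^2"] e by simp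
      then obtain N0 where N0: "\<And>N. N \<ge> N0 \<Longrightarrow> T N * q < (e/2)^2"
        unfolding eventually_sequentially by blast
      have cl: "\<bar>ptilde p m x - ptilde p N0 x\<bar> < e/2" if "m \<ge> N0" for m
      proof -
        have "\<bar>ptilde p m x - ptilde p N0 x\<bar>^2 < (e/2)^2"
          using rpb[OF that] N0[of N0] by simp
        then show ?thesis by (rule power2_less_imp_less) (use e in simp)
      qed
      show "\<exists>M. \<forall>m\<ge>M. \<forall>n\<ge>M. dist (ptilde p m x) (ptilde p n x) < e"
      proof (intro exI allI impI)
        fix m n assume "N0 \<le> m" "N0 \<le> n"
        then have "\<bar>ptilde p m x - ptilde p N0 x\<bar> < e/2" "\<bar>ptilde p n x - ptilde p N0 x\<bar> < e/2"
          using cl by auto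
        then show "dist (ptilde p m x) (ptilde p n x) < e" unfolding dist_real_def by linarith
      qed
    qed
    then have conv: "(\<lambda>N. ptilde p N x) \<longlonglongrightarrow> g x"
      unfolding g_def by (simp add: Cauchy_convergent_iff convergent_LIMSEQ_iff)
    have "(\<lambda>M. (ptilde p M x - ptilde p N x)^2) \<longlonglongrightarrow> (g x - ptilde p N x)^2"
      by (intro tendsto_intros conv)
    then have "(g x - ptilde p N x)^2 \<le> T N * q"
      by (rule LIMSEQ_le_const2) (use rpb in auto)
    then have "(ptilde p N x - g x)^2 \<le> T N * q" by (simp add: power2_commute)
    then have "ennreal ((ptilde p N x - g x)^2) \<le> ennreal (T N * q)" by (rule ennreal_leI)
    also have "\<dots> = ennreal (T N) * Q x" unfolding Qq using Tpos[of N] q0 by (simp add: ennreal_mult)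
    finally show ?thesis .
  qed
  have nnI: "(\<integral>\<^sup>+x. ennreal ((ptilde p N x - g x)^2) \<partial>Z2_haar) \<le> ennreal (T N * B)" for N
  proof -
    have "(\<integral>\<^sup>+x. ennreal ((ptilde p N x - g x)^2) \<partial>Z2_haar) \<le> (\<integral>\<^sup>+x. ennreal (T N) * Q x \<partial>Z2_haar)"
      by (intro nn_integral_mono key)
    also have "\<dots> = ennreal (T N) * (\<integral>\<^sup>+x. Q x \<partial>Z2_haar)" by (rule nn_integral_cmult[OF Qmeas])
    also have "\<dots> \<le> ennreal (T N) * ennreal B" using QI by (rule mult_left_mono) simp
    also have "\<dots> = ennreal (T N * B)" using Tpos[of N] B0 by (simp add: ennreal_mult)
    finally show ?thesis .
  qed
  have dint: "integrable Z2_haar (\<lambda>x. (ptilde p N x - g x)^2)" for N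
  proof (rule integrableI_nonneg)
    show "(\<lambda>x. (ptilde p N x - g x)^2) \<in> borel_measurable Z2_haar" using gmeas by measurable
    show "AE x in Z2_haar. 0 \<le> (ptilde p N x - g x)^2" by simp
    show "(\<integral>\<^sup>+x. ennreal ((ptilde p N x - g x)^2) \<partial>Z2_haar) < \<infinity>"
      using nnI[of N] by (rule le_less_trans) simp
  qed
  have ib: "(\<integral>x. (ptilde p N x - g x)^2 \<partial>Z2_haar) \<le> T N * B" for N
  proof -
    have "ennreal (\<integral>x. (ptilde p N x - g x)^2 \<partial>Z2_haar) \<le> ennreal (T N * B)"
      using nnI[of N] by (subst (asm) nn_integral_eq_integral[OF dint]) auto
    then show ?thesis using Tpos[of N] B0 by (subst (asm) ennreal_le_iff) auto
  qed
  have lim: "(\<lambda>N. \<integral>x. (ptilde p N x - g x)^2 \<partial>Z2_haar) \<longlonglongrightarrow> 0"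
  proof (rule tendsto_sandwich[of "\<lambda>_. 0" _ _ "\<lambda>N. T N * B"])
    show "\<forall>\<^sub>F N in sequentially. 0 \<le> (\<integral>x. (ptilde p N x - g x)^2 \<partial>Z2_haar)"
      by (intro always_eventually allI integral_nonneg_AE) simp
    show "\<forall>\<^sub>F N in sequentially. (\<integral>x. (ptilde p N x - g x)^2 \<partial>Z2_haar) \<le> T N * B"
      using ib by (intro always_eventually allI) auto
    show "(\<lambda>_. 0::real) \<longlonglongrightarrow> 0" by simp
    show "(\<lambda>N. T N * B) \<longlonglongrightarrow> 0" using tendsto_mult_left_zero[OF Tlim, of B] by simp
  qed
  have g2: "integrable Z2_haar (\<lambda>x. (g x)^2)"
  proof (rule Bochner_Integration.integrable_bound)
    show "integrable Z2_haar (\<lambda>x. 2 * (ptilde p 0 x - g x)^2 + 2 * (ptilde p 0 x)^2)"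
      using dint[of 0] by (intro Bochner_Integration.integrable_add integrable_mult_right)
         (auto simp: ptilde_def)
    show "(\<lambda>x. (g x)^2) \<in> borel_measurable Z2_haar" using gmeas by measurable
    show "AE x in Z2_haar. norm ((g x)^2) \<le> norm (2 * (ptilde p 0 x - g x)^2 + 2 * (ptilde p 0 x)^2)"
      using sq_bound by simp
  qed
  have "L2_lim p g" unfolding L2_lim_def using gmeas g2 lim by blast
  then show ?thesis by blast
qed



lemma sq_bound2: "((a::real) - b)^2 \<le> 2 * a^2 + 2 * b^2"
proof -
  have "0 \<le> (a + b)^2" by simp
  then show ?thesis by (simp add: power2_eq_square algebra_simps)
qed

lemma char_meas[measurable]: "char2 l \<in> borel_measurable Z2_haar"
  unfolding char2_def[abs_def] by (rule meas_trunc_fun[of "\<lambda>k. cis (- 2 * pi * l * real k)" "ord2 l"])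

lemma norm_char: "norm (char2 l x) = 1"
  unfolding char2_def by simp

lemma char_int:
  fixes f :: "(nat \<Rightarrow> bool) \<Rightarrow> real"
  assumes f: "integrable Z2_haar f"
  shows "integrable Z2_haar (\<lambda>x. char2 l x * complex_of_real (f x))"
proof (rule Bochner_Integration.integrable_bound)
  show "integrable Z2_haar f" by (rule f)
  show "(\<lambda>x. char2 l x * complex_of_real (f x)) \<in> borel_measurable Z2_haar"
    using borel_measurable_integrable[OF f] by measurable
  show "AE x in Z2_haar. norm (char2 l x * complex_of_real (f x)) \<le> norm (f x)"
    by (simp add: norm_mult norm_char)
qed

lemma fourier_diff:
  fixes f g :: "(nat \<Rightarrow> bool) \<Rightarrow> real"
  assumes f: "integrable Z2_haar f" and g: "integrable Z2_haar g"
  shows "norm (fourier2 f l - fourier2 g l) \<le> (\<integral>x. \<bar>f x - g x\<bar> \<partial>Z2_haar)"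
proof -
  have "fourier2 f l - fourier2 g l = (\<integral>x. char2 l x * complex_of_real (f x) - char2 l x * complex_of_real (g x) \<partial>Z2_haar)"
    unfolding fourier2_def by (rule Bochner_Integration.integral_diff[symmetric]) (intro char_int f g)+
  also have "\<dots> = (\<integral>x. char2 l x * complex_of_real (f x - g x) \<partial>Z2_haar)"
    by (simp add: right_diff_distrib)
  finally have e: "fourier2 f l - fourier2 g l = (\<integral>x. char2 l x * complex_of_real (f x - g x) \<partial>Z2_haar)" .
  have "norm (fourier2 f l - fourier2 g l) \<le> (\<integral>x. norm (char2 l x * complex_of_real (f x - g x)) \<partial>Z2_haar)"
    unfolding e by (rule integral_norm_bound)
  also have "\<dots> = (\<integral>x. \<bar>f x - g x\<bar> \<partial>Z2_haar)"
    by (simp add: norm_mult norm_char flip: of_real_diff)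
  finally show ?thesis .
qed

lemma L1_le_L2:
  fixes h :: "(nat \<Rightarrow> bool) \<Rightarrow> real"
  assumes h: "integrable Z2_haar h" and h2: "integrable Z2_haar (\<lambda>x. (h x)^2)"
  shows "(\<integral>x. \<bar>h x\<bar> \<partial>Z2_haar) \<le> sqrt (\<integral>x. (h x)^2 \<partial>Z2_haar)"
proof -
  interpret P: prob_space Z2_haar by (rule prob_Z2)
  have a: "integrable Z2_haar (\<lambda>x. \<bar>h x\<bar>)" using h by simp
  have a2: "integrable Z2_haar (\<lambda>x. (\<bar>h x\<bar>)^2)" using h2 by simp
  have "0 \<le> P.variance (\<lambda>x. \<bar>h x\<bar>)" by (rule P.variance_positive)
  also have "\<dots> = (\<integral>x. (\<bar>h x\<bar>)^2 \<partial>Z2_haar) - (\<integral>x. \<bar>h x\<bar> \<partial>Z2_haar)^2"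
    by (rule P.variance_eq[OF a a2])
  finally have "(\<integral>x. \<bar>h x\<bar> \<partial>Z2_haar)^2 \<le> (\<integral>x. (h x)^2 \<partial>Z2_haar)" by simp
  then show ?thesis by (rule real_le_rsqrt)
qed

lemma fourier_sum:
  "fourier2 (ptilde p N) l = (\<Sum>n<Suc N. fourier2 (ee p n) l)"
proof -
  have ei: "integrable Z2_haar (ee p n)" for n unfolding ee_def[abs_def] by (rule trunc_integrable)
  have "fourier2 (ptilde p N) l = (\<integral>x. (\<Sum>n<Suc N. char2 l x * complex_of_real (ee p n x)) \<partial>Z2_haar)"
    unfolding fourier2_def tele[of p N] by (simp only: of_real_sum sum_distrib_left)
  also have "\<dots> = (\<Sum>n<Suc N. fourier2 (ee p n) l)"
    unfolding fourier2_def by (rule Bochner_Integration.integral_sum) (intro char_int ei)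
  finally show ?thesis .
qed



lemma pointwise_cs:
  fixes f :: "nat \<Rightarrow> complex" and c :: "nat \<Rightarrow> real"
  assumes "\<And>n. 0 < c n"
  shows "(cmod (\<Sum>n\<in>A. f n))^2 \<le> (\<Sum>n\<in>A. c n) * (\<Sum>n\<in>A. (cmod (f n))^2 / c n)"
proof -
  have "cmod (\<Sum>n\<in>A. f n) \<le> (\<Sum>n\<in>A. cmod (f n))" by (rule norm_sum)
  then have "(cmod (\<Sum>n\<in>A. f n))^2 \<le> (\<Sum>n\<in>A. cmod (f n))^2" by (rule power_mono) simp
  also have "\<dots> \<le> (\<Sum>n\<in>A. c n) * (\<Sum>n\<in>A. (cmod (f n))^2 / c n)" by (rule cs_weighted) (rule assms)
  finally show ?thesis .
qed

lemma hs_bound: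
  assumes s: "s > 0" and r: "\<forall>n k. 1 \<le> n \<and> k < 2^n \<longrightarrow> 0 < r n k"
    and cs: "summable (cw r s)" and hp: "in_H1 r p" and L: "L2_lim p g"
  shows "in_Hs s g \<and> Hs_norm s g \<le> sqrt (suminf (cw r s)) * H1_norm r p"
proof -
  interpret P: prob_space Z2_haar by (rule prob_Z2)
  define c where "c = cw r s"
  have cpos: "\<And>n. 0 < c n" unfolding c_def by (rule cw_pos[OF r])
  have cnn: "\<And>n. 0 \<le> c n" using cpos less_imp_le by blast
  have csum: "summable c" using cs unfolding c_def .
  define K where "K = suminf c"
  have K0: "0 \<le> K" unfolding K_def by (rule suminf_nonneg[OF csum cnn])
  have hs: "summable (H1_seminorm_terms r p)" using hp unfolding in_H1_def .
  have bsum: "summable (beta r p)"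
  proof -
    have "summable (\<lambda>n. beta r p (Suc n))" using hs by (simp add: beta_def)
    then show ?thesis by (simp only: summable_Suc_iff)
  qed
  have bnn: "\<And>n. 0 \<le> beta r p n" using H1_nonneg[OF r] by (simp add: beta_def)
  define B where "B = suminf (beta r p)"
  have B0: "0 \<le> B" unfolding B_def by (rule suminf_nonneg[OF bsum bnn])
  have HB: "H1_norm r p = sqrt B"
  proof -
    have "(\<Sum>n. beta r p (Suc n)) = B - beta r p 0" unfolding B_def by (rule suminf_split_head[OF bsum])
    then have "suminf (H1_seminorm_terms r p) = B - (p 0 0)^2" by (simp add: beta_def)
    then show ?thesis unfolding H1_norm_def by simp
  qed
  from L have gmeas: "g \<in> borel_measurable Z2_haar" and g2: "integrable Z2_haar (\<lambda>x. (g x)^2)"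
    and lim: "(\<lambda>n. \<integral>x. (ptilde p n x - g x)^2 \<partial>Z2_haar) \<longlonglongrightarrow> 0"
    unfolding L2_lim_def by auto
  have gint: "integrable Z2_haar g" by (rule P.square_integrable_imp_integrable[OF gmeas g2])
  have pint: "integrable Z2_haar (ptilde p N)" for N
    unfolding ptilde_def[abs_def] by (rule trunc_integrable)
  have p2int: "integrable Z2_haar (\<lambda>x. (ptilde p N x)^2)" for N
    unfolding ptilde_def by (rule trunc_integrable)
  have dint: "integrable Z2_haar (\<lambda>x. ptilde p N x - g x)" for N
    using pint gint by (rule Bochner_Integration.integrable_diff)
  have d2int: "integrable Z2_haar (\<lambda>x. (ptilde p N x - g x)^2)" for N
  proof (rule Bochner_Integration.integrable_bound)
    show "integrable Z2_haar (\<lambda>x. 2 * (ptilde p N x)^2 + 2 * (g x)^2)"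
      using p2int g2 by (intro Bochner_Integration.integrable_add integrable_mult_right)
    show "(\<lambda>x. (ptilde p N x - g x)^2) \<in> borel_measurable Z2_haar" using gmeas by measurable
    show "AE x in Z2_haar. norm ((ptilde p N x - g x)^2) \<le> norm (2 * (ptilde p N x)^2 + 2 * (g x)^2)"
      using sq_bound2 by simp
  qed
  have L1: "(\<lambda>N. \<integral>x. \<bar>ptilde p N x - g x\<bar> \<partial>Z2_haar) \<longlonglongrightarrow> 0"
  proof (rule tendsto_sandwich[of "\<lambda>_. 0" _ _ "\<lambda>N. sqrt (\<integral>x. (ptilde p N x - g x)^2 \<partial>Z2_haar)"])
    show "\<forall>\<^sub>F N in sequentially. 0 \<le> (\<integral>x. \<bar>ptilde p N x - g x\<bar> \<partial>Z2_haar)"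
      by (intro always_eventually allI integral_nonneg_AE) simp
    show "\<forall>\<^sub>F N in sequentially. (\<integral>x. \<bar>ptilde p N x - g x\<bar> \<partial>Z2_haar) \<le> sqrt (\<integral>x. (ptilde p N x - g x)^2 \<partial>Z2_haar)"
      using L1_le_L2[OF dint d2int] by (intro always_eventually allI) auto
    show "(\<lambda>_. 0::real) \<longlonglongrightarrow> 0" by simp
    show "(\<lambda>N. sqrt (\<integral>x. (ptilde p N x - g x)^2 \<partial>Z2_haar)) \<longlonglongrightarrow> 0"
      using tendsto_real_sqrt[OF lim] by simp
  qed
  have fconv: "(\<lambda>N. fourier2 (ptilde p N) l) \<longlonglongrightarrow> fourier2 g l" for l
  proof (rule LIM_zero_cancel, rule Lim_null_comparison)
    show "\<forall>\<^sub>F N in sequentially. norm (fourier2 (ptilde p N) l - fourier2 g l) \<le> (\<integral>x. \<bar>ptilde p N x - g x\<bar> \<partial>Z2_haar)"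
      using fourier_diff[OF pint gint] by (intro always_eventually allI) auto
    show "(\<lambda>N. \<integral>x. \<bar>ptilde p N x - g x\<bar> \<partial>Z2_haar) \<longlonglongrightarrow> 0" by (rule L1)
  qed
  define w where "w l = (1 + abs2 l) powr (2 * s)" for l
  have w0: "0 \<le> w l" for l by (simp add: w_def)
  have finbound: "(\<Sum>l\<in>F. Hs_terms s g l) \<le> K * B" if F: "finite F" "F \<subseteq> Lambda2" for F
  proof -
    define f where "f n l = fourier2 (ee p n) l" for n l
    define t where "t n l = w l * (cmod (f n l))^2 / c n" for n l
    have bes: "(\<Sum>l\<in>F. t n l) \<le> beta r p n" for n
    proof -
      have "(\<Sum>l\<in>F. w l * (cmod (f n l))^2) \<le> (1 + 2^n) powr (2 * s) * ((\<Sum>k<2^n. (hh p n k)^2) / 2^n)"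
        unfolding w_def f_def ee_def[abs_def] using s F by (intro bessel) auto
      also have "\<dots> \<le> c n * beta r p n"
        unfolding c_def using key_bound[OF _ r, of s n p] s by (simp add: Ivar_def)
      finally have "(\<Sum>l\<in>F. w l * (cmod (f n l))^2) \<le> c n * beta r p n" .
      then have "(\<Sum>l\<in>F. w l * (cmod (f n l))^2) / c n \<le> beta r p n"
        using cpos[of n] by (simp add: pos_divide_le_eq mult.commute)
      then show ?thesis unfolding t_def by (simp add: sum_divide_distrib)
    qed
    have SN: "(\<Sum>l\<in>F. w l * (cmod (fourier2 (ptilde p N) l))^2) \<le> K * B" for N
    proof -
      have "(\<Sum>l\<in>F. w l * (cmod (fourier2 (ptilde p N) l))^2) \<le> (\<Sum>l\<in>F. K * (\<Sum>n<Suc N. t n l))"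
      proof (rule sum_mono)
        fix l
        have "(cmod (fourier2 (ptilde p N) l))^2 = (cmod (\<Sum>n<Suc N. f n l))^2"
          unfolding f_def fourier_sum ..
        also have "\<dots> \<le> (\<Sum>n<Suc N. c n) * (\<Sum>n<Suc N. (cmod (f n l))^2 / c n)"
          by (rule pointwise_cs) (rule cpos)
        also have "\<dots> \<le> K * (\<Sum>n<Suc N. (cmod (f n l))^2 / c n)"
        proof (rule mult_right_mono)
          show "(\<Sum>n<Suc N. c n) \<le> K" unfolding K_def by (rule sum_le_suminf[OF csum]) (auto simp: cnn)
          show "0 \<le> (\<Sum>n<Suc N. (cmod (f n l))^2 / c n)" using cnn by (intro sum_nonneg divide_nonneg_nonneg) auto
        qed
        finally have "w l * (cmod (fourier2 (ptilde p N) l))^2 \<le> w l * (K * (\<Sum>n<Suc N. (cmod (f n l))^2 / c n))"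
          using w0 by (rule mult_left_mono)
        also have "\<dots> = K * (\<Sum>n<Suc N. t n l)"
          unfolding t_def by (simp add: sum_distrib_left algebra_simps)
        finally show "w l * (cmod (fourier2 (ptilde p N) l))^2 \<le> K * (\<Sum>n<Suc N. t n l)" .
      qed
      also have "\<dots> = K * (\<Sum>l\<in>F. \<Sum>n<Suc N. t n l)" by (rule sum_distrib_left[symmetric])
      also have "\<dots> = K * (\<Sum>n<Suc N. \<Sum>l\<in>F. t n l)" by (subst sum.swap) (rule refl)
      also have "\<dots> \<le> K * (\<Sum>n<Suc N. beta r p n)"
        using K0 bes by (intro mult_left_mono sum_mono) auto
      also have "\<dots> \<le> K * B"
        unfolding B_def using K0 by (intro mult_left_mono sum_le_suminf[OF bsum]) (auto simp: bnn)
      finally show ?thesis .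
    qed
    have "(\<lambda>N. \<Sum>l\<in>F. w l * (cmod (fourier2 (ptilde p N) l))^2) \<longlonglongrightarrow> (\<Sum>l\<in>F. w l * (cmod (fourier2 g l))^2)"
      by (intro tendsto_intros fconv)
    then have "(\<Sum>l\<in>F. w l * (cmod (fourier2 g l))^2) \<le> K * B"
      by (rule LIMSEQ_le_const2) (use SN in auto)
    then show ?thesis unfolding Hs_terms_def w_def .
  qed
  have hnn: "0 \<le> Hs_terms s g l" for l unfolding Hs_terms_def by simp
  have summ: "Hs_terms s g summable_on Lambda2"
  proof (rule nonneg_bdd_above_summable_on)
    show "\<And>x. x \<in> Lambda2 \<Longrightarrow> 0 \<le> Hs_terms s g x" by (rule hnn)
    show "bdd_above (sum (Hs_terms s g) ` {F. F \<subseteq> Lambda2 \<and> finite F})"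
      using finbound by (intro bdd_aboveI[of _ "K * B"]) auto
  qed
  have "infsum (Hs_terms s g) Lambda2 \<le> K * B"
    using summ by (rule infsum_le_finite_sums) (rule finbound)
  then have "Hs_norm s g \<le> sqrt (K * B)" unfolding Hs_norm_def by (rule real_sqrt_le_mono)
  also have "\<dots> = sqrt (suminf (cw r s)) * H1_norm r p"
    unfolding HB K_def c_def by (simp add: real_sqrt_mult)
  finally have "Hs_norm s g \<le> sqrt (suminf (cw r s)) * H1_norm r p" .
  moreover have "in_Hs s g" unfolding in_Hs_def by (rule summ)
  ultimately show ?thesis by blast
qed

theorem proposition3p1:
  fixes r :: "nat \<Rightarrow> nat \<Rightarrow> real" and s :: real
  assumes "s > 0"
    and "\<forall>n k. 1 \<le> n \<and> k < 2^n \<longrightarrow> 0 < r n k"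
    and "summable (\<lambda>n. max_res r (Suc n) / 2 powr (real (Suc n) * (1 - 2 * s)))"
  shows "\<exists>C. \<forall>p. in_H1 r p \<longrightarrow>
           (\<exists>g. L2_lim p g) \<and>
           (\<forall>g. L2_lim p g \<longrightarrow> in_Hs s g \<and> Hs_norm s g \<le> C * H1_norm r p)"
proof -
  have cs: "summable (cw r s)" by (rule cw_summable[OF assms])
  show ?thesis
  proof (rule exI[of _ "sqrt (suminf (cw r s))"], intro allI impI conjI)
    fix p assume hp: "in_H1 r p"
    show "\<exists>g. L2_lim p g" by (rule exists_lim[OF assms(1,2) cs hp])
    fix g assume L: "L2_lim p g"
    show "in_Hs s g" using hs_bound[OF assms(1,2) cs hp L] by blast
    show "Hs_norm s g \<le> sqrt (suminf (cw r s)) * H1_norm r p" using hs_bound[OF assms(1,2) cs hp L] by blast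
  qed
qed

end
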